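(* Let $X$ be a positive random variable with finite mean $\mu$, which is either discrete with probability mass function $f_X$ or absolutely continuous with density $f_X$. Suppose there exist positive constants $c$ and $t_0$ such that $$\frac{x}{\mu}f_X(x)\le f_X(x-c)\qquad\text{for all } x\ge t_0.$$ Then, if $X^s$ has the size bias distribution of $X$, $$\mathbb{P}(X^s\ge t)\le \mathbb{P}(X+c\ge t)\qquad\text{for all } t\ge t_0.$$
   Context: Size bias transform: for a positive random variable $X$ with finite mean $\mu$, $X^s$ has the size bias distribution of $X$ if $\mathbb{E}[Xf(X)]=\mu\mathbb{E}[f(X^s)]$ for all $f$ with $\mathbb{E}[Xf(X)]<\infty$; when $X$ has density or mass function $f_X$, $X^s$ has density or mass function $x f_X(x)/\mu$. *)

theory Defs
  imports "HOL-Probability.Probability"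
begin

definition size_bias ::
  "'a measure \<Rightarrow> ('a \<Rightarrow> real) \<Rightarrow> 'b measure \<Rightarrow> ('b \<Rightarrow> real) \<Rightarrow> bool" where
  "size_bias M X N Xs \<longleftrightarrow>
     (\<forall>f :: real \<Rightarrow> real. f \<in> borel_measurable borel \<longrightarrow>
        integrable M (\<lambda>\<omega>. X \<omega> * f (X \<omega>)) \<longrightarrow>
        (\<integral>\<omega>. X \<omega> * f (X \<omega>) \<partial>M) = (\<integral>\<omega>. X \<omega> \<partial>M) * (\<integral>\<omega>. f (Xs \<omega>) \<partial>N))"

definition discrete_with_pmf :: "'a measure \<Rightarrow> ('a \<Rightarrow> real) \<Rightarrow> (real \<Rightarrow> real) \<Rightarrow> bool" where
  "discrete_with_pmf M X f \<longleftrightarrow>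
     (\<exists>S. countable S \<and> (AE \<omega> in M. X \<omega> \<in> S)) \<and>
     (\<forall>x. f x = measure M {\<omega> \<in> space M. X \<omega> = x})"

definition abs_cont_with_density :: "'a measure \<Rightarrow> ('a \<Rightarrow> real) \<Rightarrow> (real \<Rightarrow> real) \<Rightarrow> bool" where
  "abs_cont_with_density M X f \<longleftrightarrow>
     (\<forall>x. 0 \<le> f x) \<and> distributed M lborel X (\<lambda>x. ennreal (f x))"

end

theory Submission
  imports Defs
begin

lemma cont_case:
  fixes M :: "'a measure" and X :: "'a \<Rightarrow> real" and fX :: "real \<Rightarrow> real"
  assumes P: "prob_space M" and Xm: "X \<in> borel_measurable M"
    and ac: "abs_cont_with_density M X fX"
    and mu: "mu > 0" and tt: "t \<ge> t0" and t0: "t0 > 0"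
    and key: "\<And>x. x \<ge> t0 \<Longrightarrow> x * fX x \<le> mu * fX (x - c)"
  shows "(\<integral>\<^sup>+\<omega>. ennreal (X \<omega> * indicator {t..} (X \<omega>)) \<partial>M)
         \<le> ennreal mu * emeasure M {\<omega> \<in> space M. t \<le> X \<omega> + c}"
proof -
  have nn: "\<And>x. 0 \<le> fX x" and D: "distributed M lborel X (\<lambda>x. ennreal (fX x))"
    using ac unfolding abs_cont_with_density_def by auto
  have Fm: "(\<lambda>x. ennreal (fX x)) \<in> borel_measurable borel"
    using distributed_borel_measurable[OF D] by simp
  have Fm2: "(\<lambda>x. ennreal (fX (x - c))) \<in> borel_measurable borel"
    using measurable_compose[OF _ Fm, of "\<lambda>x. x - c" borel] by simp
  have "(\<integral>\<^sup>+\<omega>. ennreal (X \<omega> * indicator {t..} (X \<omega>)) \<partial>M)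
      = (\<integral>\<^sup>+x. ennreal (fX x) * ennreal (x * indicator {t..} x) \<partial>lborel)"
    by (rule distributed_nn_integral[OF D, symmetric]) simp
  also have "\<dots> \<le> (\<integral>\<^sup>+x. ennreal mu * (ennreal (fX (x - c)) * indicator {t..} x) \<partial>lborel)"
  proof (rule nn_integral_mono)
    fix x
    show "ennreal (fX x) * ennreal (x * indicator {t..} x)
          \<le> ennreal mu * (ennreal (fX (x - c)) * indicator {t..} x)"
    proof (cases "t \<le> x")
      case True
      then have "x * fX x \<le> mu * fX (x - c)" using key tt by auto
      moreover have "0 \<le> x" using True tt t0 by linarith
      ultimately show ?thesis using True nn mu
        by (simp add: ennreal_mult'[symmetric] ennreal_mult[symmetric] mult.commute)
    qed simp
  qed
  also have "\<dots> = ennreal mu * (\<integral>\<^sup>+x. ennreal (fX (x - c)) * indicator {t..} x \<partial>lborel)"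
    using Fm2 by (intro nn_integral_cmult) auto
  also have "(\<integral>\<^sup>+x. ennreal (fX (x - c)) * indicator {t..} x \<partial>lborel)
     = (\<integral>\<^sup>+y. ennreal (fX y) * indicator {t-c..} y \<partial>lborel)"
  proof -
    have "(\<integral>\<^sup>+y. ennreal (fX y) * indicator {t-c..} y \<partial>lborel)
       = ennreal \<bar>1\<bar> * (\<integral>\<^sup>+x. ennreal (fX (- c + 1 * x)) * indicator {t-c..} (- c + 1 * x) \<partial>lborel)"
      using Fm by (intro nn_integral_real_affine) auto
    also have "\<dots> = (\<integral>\<^sup>+x. ennreal (fX (x - c)) * indicator {t..} x \<partial>lborel)"
      by (simp only: abs_one ennreal_1 mult_1 mult_1_left) (intro nn_integral_cong, auto simp: indicator_def)
    finally show ?thesis by simp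
  qed
  also have "(\<integral>\<^sup>+y. ennreal (fX y) * indicator {t-c..} y \<partial>lborel)
      = emeasure M (X -` {t-c..} \<inter> space M)"
    by (rule distributed_emeasure[OF D, symmetric]) simp
  also have "X -` {t-c..} \<inter> space M = {\<omega> \<in> space M. t \<le> X \<omega> + c}" by auto
  finally show ?thesis .
qed

lemma disc_case:
  fixes M :: "'a measure" and X :: "'a \<Rightarrow> real" and fX :: "real \<Rightarrow> real"
  assumes P: "prob_space M" and Xm[measurable]: "X \<in> borel_measurable M"
    and dp: "discrete_with_pmf M X fX"
    and mu: "mu > 0" and tt: "t \<ge> t0" and t0: "t0 > 0"
    and key: "\<And>x. x \<ge> t0 \<Longrightarrow> x * fX x \<le> mu * fX (x - c)"
  shows "(\<integral>\<^sup>+\<omega>. ennreal (X \<omega> * indicator {t..} (X \<omega>)) \<partial>M)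
         \<le> ennreal mu * emeasure M {\<omega> \<in> space M. t \<le> X \<omega> + c}"
proof -
  interpret prob_space M by (rule P)
  obtain S where S: "countable S" "AE \<omega> in M. X \<omega> \<in> S"
    and fX: "\<And>x. fX x = measure M {\<omega> \<in> space M. X \<omega> = x}"
    using dp unfolding discrete_with_pmf_def by auto
  define E where "E x = {\<omega> \<in> space M. X \<omega> = x}" for x
  have Em[measurable]: "E x \<in> sets M" for x unfolding E_def by measurable
  define D where "D = {x\<in>S. t \<le> x}"
  have cD: "countable D" unfolding D_def using S(1) by auto
  have "(\<integral>\<^sup>+\<omega>. ennreal (X \<omega> * indicator {t..} (X \<omega>)) \<partial>M)
      = (\<integral>\<^sup>+\<omega>. (\<integral>\<^sup>+x. ennreal x * indicator (E x) \<omega> \<partial>count_space D) \<partial>M)"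
  proof (rule nn_integral_cong_AE)
    show "AE \<omega> in M. ennreal (X \<omega> * indicator {t..} (X \<omega>))
            = (\<integral>\<^sup>+x. ennreal x * indicator (E x) \<omega> \<partial>count_space D)"
      using S(2) AE_space
    proof eventually_elim
      case (elim \<omega>)
      show ?case
      proof (cases "t \<le> X \<omega>")
        case True
        then have XD: "X \<omega> \<in> D" using elim by (auto simp: D_def)
        have "(\<integral>\<^sup>+x. ennreal x * indicator (E x) \<omega> \<partial>count_space D)
            = (\<integral>\<^sup>+x. ennreal x * indicator {X \<omega>} x \<partial>count_space D)"
          using elim by (intro nn_integral_cong) (auto simp: E_def indicator_def)
        also have "\<dots> = ennreal (X \<omega>) * emeasure (count_space D) {X \<omega>}"
          using XD by (intro nn_integral_indicator_singleton) auto
        finally show ?thesis using XD True by (auto simp: indicator_def)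
      next
        case False
        have "(\<integral>\<^sup>+x. ennreal x * indicator (E x) \<omega> \<partial>count_space D) = (\<integral>\<^sup>+x. 0 \<partial>count_space D)"
          using False by (intro nn_integral_cong) (auto simp: E_def D_def indicator_def)
        then show ?thesis using False by simp
      qed
    qed
  qed
  also have "\<dots> = (\<integral>\<^sup>+x. (\<integral>\<^sup>+\<omega>. ennreal x * indicator (E x) \<omega> \<partial>M) \<partial>count_space D)"
    by (rule nn_integral_count_space_nn_integral[OF cD]) simp
  also have "\<dots> = (\<integral>\<^sup>+x. ennreal (x * fX x) \<partial>count_space D)"
  proof (rule nn_integral_cong)
    fix x assume "x \<in> space (count_space D)"
    then have "0 \<le> x" using tt t0 by (auto simp: D_def)
    then show "(\<integral>\<^sup>+\<omega>. ennreal x * indicator (E x) \<omega> \<partial>M) = ennreal (x * fX x)"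
      by (simp add: nn_integral_cmult_indicator emeasure_eq_measure fX E_def ennreal_mult)
  qed
  also have "\<dots> \<le> (\<integral>\<^sup>+x. ennreal mu * emeasure M (E (x - c)) \<partial>count_space D)"
  proof (rule nn_integral_mono)
    fix x assume "x \<in> space (count_space D)"
    then have "t0 \<le> x" using tt by (auto simp: D_def)
    then have "x * fX x \<le> mu * fX (x - c)" by (rule key)
    then show "ennreal (x * fX x) \<le> ennreal mu * emeasure M (E (x - c))"
      using mu by (simp add: emeasure_eq_measure fX E_def ennreal_mult[symmetric])
  qed
  also have "\<dots> = ennreal mu * (\<integral>\<^sup>+x. emeasure M (E (x - c)) \<partial>count_space D)"
    by (rule nn_integral_cmult) simp
  also have "(\<integral>\<^sup>+x. emeasure M (E (x - c)) \<partial>count_space D) = emeasure M (\<Union>x\<in>D. E (x - c))"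
    by (rule emeasure_UN_countable[symmetric]) (auto simp: cD disjoint_family_on_def E_def)
  also have "\<dots> \<le> emeasure M {\<omega> \<in> space M. t \<le> X \<omega> + c}"
    by (rule emeasure_mono) (auto simp: E_def D_def)
  finally show ?thesis by (simp add: mult_left_mono)
qed

theorem theorem3p1:
  fixes M :: "'a measure" and N :: "'b measure"
    and X :: "'a \<Rightarrow> real" and Xs :: "'b \<Rightarrow> real"
    and fX :: "real \<Rightarrow> real" and c t0 :: real
  assumes "prob_space M" and "prob_space N"
    and "X \<in> borel_measurable M" and "Xs \<in> borel_measurable N"
    and "AE \<omega> in M. X \<omega> > 0"
    and "integrable M X"
    and "discrete_with_pmf M X fX \<or> abs_cont_with_density M X fX"
    and "c > 0" and "t0 > 0"
    and "\<And>x. x \<ge> t0 \<Longrightarrow> x / (\<integral>\<omega>. X \<omega> \<partial>M) * fX x \<le> fX (x - c)"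
    and "size_bias M X N Xs"
  shows "\<forall>t \<ge> t0. measure N {\<omega> \<in> space N. Xs \<omega> \<ge> t}
                   \<le> measure M {\<omega> \<in> space M. X \<omega> + c \<ge> t}"
proof (intro allI impI)
  fix t assume tt: "t0 \<le> t"
  interpret M: prob_space M by fact
  interpret N: prob_space N by fact
  note Xm[measurable] = assms(3) and Xsm[measurable] = assms(4)
  define mu where "mu = (\<integral>\<omega>. X \<omega> \<partial>M)"
  have mu0: "0 \<le> mu" unfolding mu_def
    using assms(5) by (intro integral_nonneg_AE) (auto elim: AE_mp)
  have mupos: "mu > 0"
  proof (rule ccontr)
    assume "\<not> mu > 0"
    then have "mu = 0" using mu0 by simp
    have "AE \<omega> in M. 0 \<le> X \<omega>" using assms(5) by (auto elim: AE_mp)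
    with \<open>mu = 0\<close> have "AE \<omega> in M. X \<omega> = 0"
      using integral_nonneg_eq_0_iff_AE[OF assms(6)] unfolding mu_def
      by auto
    with assms(5) have "AE \<omega> in M. False" by eventually_elim auto
    then show False by simp
  qed
  have key: "\<And>x. x \<ge> t0 \<Longrightarrow> x * fX x \<le> mu * fX (x - c)"
  proof -
    fix x assume "x \<ge> t0"
    then have "x / mu * fX x \<le> fX (x - c)" using assms(10) unfolding mu_def by auto
    then have "mu * (x / mu * fX x) \<le> mu * fX (x - c)" using mupos by (intro mult_left_mono) auto
    then show "x * fX x \<le> mu * fX (x - c)" using mupos by simp
  qed
  have ineq: "(\<integral>\<^sup>+\<omega>. ennreal (X \<omega> * indicator {t..} (X \<omega>)) \<partial>M)
         \<le> ennreal mu * emeasure M {\<omega> \<in> space M. t \<le> X \<omega> + c}"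
    using assms(7)
  proof
    assume "discrete_with_pmf M X fX"
    then show ?thesis using disc_case[OF assms(1,3) _ mupos tt assms(9) key] by blast
  next
    assume "abs_cont_with_density M X fX"
    then show ?thesis using cont_case[OF assms(1,3) _ mupos tt assms(9) key] by blast
  qed
  have int: "integrable M (\<lambda>\<omega>. X \<omega> * indicator {t..} (X \<omega>))"
    using assms(6) by (rule Bochner_Integration.integrable_bound) (auto simp: indicator_def)
  have nonneg: "AE \<omega> in M. 0 \<le> X \<omega> * indicator {t..} (X \<omega>)"
    using assms(5) by (auto elim: AE_mp)
  have "ennreal (\<integral>\<omega>. X \<omega> * indicator {t..} (X \<omega>) \<partial>M)
      = (\<integral>\<^sup>+\<omega>. ennreal (X \<omega> * indicator {t..} (X \<omega>)) \<partial>M)"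
    by (rule nn_integral_eq_integral[OF int nonneg, symmetric])
  also note ineq
  also have "ennreal mu * emeasure M {\<omega> \<in> space M. t \<le> X \<omega> + c}
      = ennreal (mu * measure M {\<omega> \<in> space M. t \<le> X \<omega> + c})"
    using mu0 by (simp add: M.emeasure_eq_measure ennreal_mult)
  finally have I: "(\<integral>\<omega>. X \<omega> * indicator {t..} (X \<omega>) \<partial>M) \<le> mu * measure M {\<omega> \<in> space M. t \<le> X \<omega> + c}"
    using mu0 by (simp add: ennreal_le_iff)
  have "(\<integral>\<omega>. X \<omega> * indicator {t..} (X \<omega>) \<partial>M) = mu * (\<integral>\<omega>. indicator {t..} (Xs \<omega>) \<partial>N)"
    using assms(11) int unfolding size_bias_def mu_def by auto
  also have "(\<integral>\<omega>. indicator {t..} (Xs \<omega>) \<partial>N) = (\<integral>\<omega>. indicator {\<omega> \<in> space N. t \<le> Xs \<omega>} \<omega> \<partial>N)"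
    by (intro Bochner_Integration.integral_cong) (auto simp: indicator_def)
  also have "\<dots> = measure N {\<omega> \<in> space N. t \<le> Xs \<omega>}"
    by simp
  finally have "mu * measure N {\<omega> \<in> space N. t \<le> Xs \<omega>} \<le> mu * measure M {\<omega> \<in> space M. t \<le> X \<omega> + c}"
    using I by simp
  then show "measure N {\<omega> \<in> space N. Xs \<omega> \<ge> t} \<le> measure M {\<omega> \<in> space M. X \<omega> + c \<ge> t}"
    using mupos by simp
qed

end
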